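(* (a) The Baire space $\mathcal{N}$ has a $\pi$-tree $\mathbf{F}$ such that $\mathrm{cofin}\,\omega\gg\mathrm{Rise}_{\mathbf{F}}(\mathcal{N})$. (b) The Sorgenfrey line $\mathcal{R}_{\mathcal{S}}$ has a $\pi$-tree $\mathbf{G}$ such that $\mathrm{cofin}\,\omega\gg\mathrm{Rise}_{\mathbf{G}}(\mathcal{R}_{\mathcal{S}})$. (c) If $X\subseteq\mathcal{R}_{\mathcal{S}}$ and $\mathcal{R}_{\mathcal{S}}\setminus X$ is at most countable, then the subspace $X$ has a $\pi$-tree $\mathbf{H}$ such that $\mathrm{cofin}\{2n+1:n\in\omega\}\gg\mathrm{Rise}_{\mathbf{H}}(X)$.
   Context: $\mathcal{N}$ is ${}^{\omega}\omega$ with the product topology ($\omega$ discrete); $\mathcal{R}_{\mathcal{S}}$ is the real line with the topology generated by half-open intervals $[a,b)$. For a set $B$, $\mathrm{cofin}\,B=\{B\setminus F: F\subseteq B\text{ finite}\}$. Neighbourhoods are not necessarily open. $\omega=\{0,1,2,\dots\}$, ${}^{<\omega}\omega$ is the set of finite sequences of natural numbers. A tree is a strict partial order in which the set of predecessors of every node is well-ordered; $\mathrm{height}(x)$ is the ordinal isomorphic to the set of predecessors of $x$; a branch is a maximal chain; $\mathrm{sons}(x)$ is the set of immediate successors of $x$; $0$ denotes the least node. A foliage tree is a pair $\mathbf{F}=(T,l)$ with $T$ a tree (skeleton) and $l$ a function on its nodes, $\mathbf{F}_x:=l(x)$; tree notions apply via the skeleton. $\mathrm{shoot}_{\mathbf{F}}(v)=\{\bigcup_{x\in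 C}\mathbf{F}_x: C\text{ a cofinite subset of }\mathrm{sons}_{\mathbf{F}}(v)\}$; $\mathrm{scope}_{\mathbf{F}}(p)=\{x:p\in\mathbf{F}_x\}$. For families $\gamma,\delta$ of sets, $\gamma\gg\delta$ means every nonempty $D\in\delta$ contains some nonempty $G\in\gamma$. $\mathrm{rise}_{\mathbf{F}}(p,U)=\{\mathrm{height}_{\mathbf{F}}(v): v\in\mathrm{scope}_{\mathbf{F}}(p),\ \mathrm{shoot}_{\mathbf{F}}(v)\gg\{U\}\}$; $\mathrm{Rise}_{\mathbf{F}}(X)=\{\mathrm{rise}_{\mathbf{F}}(p,U):p\in X,\ U\text{ a neighbourhood of }p\text{ in }X\}$. $\mathbf{F}$ is locally strict if each non-maximal leaf $\mathbf{F}_x$ is the disjoint union of $\mathbf{F}_s$, $s\in\mathrm{sons}(x)$; has strict branches if it has a node and for each branch $B$, $\bigcap_{x\in B}\mathbf{F}_x$ is a singleton; is open in $X$ if all leaves are open in $X$; is a foliage $\omega,\omega$-tree if its skeleton is order-isomorphic to $({}^{<\omega}\omega,\subsetneq)$. A Baire foliage tree on $X$ is an open in $X$, locally strict foliage $\omega,\omega$-tree with strict branches and $\mathbf{F}_{0_{\mathbf{F}}}=X$. $\mathbf{F}$ grows into $X$ if for every $p\in X$ and neighbourhood $U$ of $p$ there is $z\in\mathrm{scope}_{\mathbf{F}}(p)$ with $\mathrm{shoot}_{\mathbf{F}}(z)\gg\{U\}$. A $\pi$-tree on $X$ is a Baire foliage tree on $X$ that grows into $X$. *)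

theory Defs
  imports "HOL-Analysis.Analysis"
begin

text \<open>Foliage omega,omega-trees are represented with skeleton (nat list, proper prefix order),
  i.e. the tree of finite sequences of naturals; the leaf function is F.\<close>

definition cofin :: "'b set \<Rightarrow> 'b set set" where
  "cofin B = {B - E | E. E \<subseteq> B \<and> finite E}"

definition sons :: "nat list \<Rightarrow> nat list set" where
  "sons s = {s @ [n] | n. True}"

definition shoot :: "(nat list \<Rightarrow> 'a set) \<Rightarrow> nat list \<Rightarrow> 'a set set" where
  "shoot F v = {\<Union>x\<in>C. F x | C. C \<in> cofin (sons v)}"

definition scope :: "(nat list \<Rightarrow> 'a set) \<Rightarrow> 'a \<Rightarrow> nat list set" where
  "scope F p = {x. p \<in> F x}"

definition refines :: "'b set set \<Rightarrow> 'b set set \<Rightarrow> bool" (infix "\<ggreater>" 50) where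
  "\<gamma> \<ggreater> \<delta> \<longleftrightarrow> (\<forall>D\<in>\<delta>. D \<noteq> {} \<longrightarrow> (\<exists>G\<in>\<gamma>. G \<noteq> {} \<and> G \<subseteq> D))"

definition nbhd :: "'a topology \<Rightarrow> 'a \<Rightarrow> 'a set \<Rightarrow> bool" where
  "nbhd T p U \<longleftrightarrow> U \<subseteq> topspace T \<and> (\<exists>V. openin T V \<and> p \<in> V \<and> V \<subseteq> U)"

text \<open>height of a node s in the skeleton is length s.\<close>
definition rise :: "(nat list \<Rightarrow> 'a set) \<Rightarrow> 'a \<Rightarrow> 'a set \<Rightarrow> nat set" where
  "rise F p U = {length v | v. v \<in> scope F p \<and> shoot F v \<ggreater> {U}}"

definition Rise :: "(nat list \<Rightarrow> 'a set) \<Rightarrow> 'a topology \<Rightarrow> nat set set" where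
  "Rise F T = {rise F p U | p U. p \<in> topspace T \<and> nbhd T p U}"

definition locally_strict :: "(nat list \<Rightarrow> 'a set) \<Rightarrow> bool" where
  "locally_strict F \<longleftrightarrow> (\<forall>x. F x = (\<Union>s\<in>sons x. F s) \<and> disjoint_family_on F (sons x))"

text \<open>Branches of the skeleton are exactly the sets {take k of f | k}, f :: nat => nat.\<close>
definition strict_branches :: "(nat list \<Rightarrow> 'a set) \<Rightarrow> bool" where
  "strict_branches F \<longleftrightarrow> (\<forall>f::nat \<Rightarrow> nat. \<exists>q. (\<Inter>k. F (map f [0..<k])) = {q})"

definition open_in_space :: "'a topology \<Rightarrow> (nat list \<Rightarrow> 'a set) \<Rightarrow> bool" where
  "open_in_space T F \<longleftrightarrow> (\<forall>x. openin T (F x))"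

definition baire_foliage_tree :: "'a topology \<Rightarrow> (nat list \<Rightarrow> 'a set) \<Rightarrow> bool" where
  "baire_foliage_tree T F \<longleftrightarrow> open_in_space T F \<and> locally_strict F \<and> strict_branches F
     \<and> F [] = topspace T"

definition grows_into :: "'a topology \<Rightarrow> (nat list \<Rightarrow> 'a set) \<Rightarrow> bool" where
  "grows_into T F \<longleftrightarrow> (\<forall>p\<in>topspace T. \<forall>U. nbhd T p U \<longrightarrow>
      (\<exists>z\<in>scope F p. shoot F z \<ggreater> {U}))"

definition pi_tree :: "'a topology \<Rightarrow> (nat list \<Rightarrow> 'a set) \<Rightarrow> bool" where
  "pi_tree T F \<longleftrightarrow> baire_foliage_tree T F \<and> grows_into T F"

definition baire_space_top :: "(nat \<Rightarrow> nat) topology" where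
  "baire_space_top = product_topology (\<lambda>_. discrete_topology (UNIV::nat set)) UNIV"

definition sorgenfrey :: "real topology" where
  "sorgenfrey = topology_generated_by {{a..<b} | a b. True}"

end

theory Submission
  imports Defs "HOL-Library.Nat_Bijection"
begin


lemma dyadic_exists:
  assumes "0 < t" "t \<le> (1::real)"
  shows "\<exists>j. (1/2)^Suc j < t \<and> t \<le> (1/2::real)^j"
proof -
  obtain n where n: "(1/2::real)^n < t" using real_arch_pow_inv[OF assms(1), of "1/2"] by auto
  define j0 where "j0 = (LEAST n. (1/2::real)^n < t)"
  have j0: "(1/2::real)^j0 < t" unfolding j0_def by (rule LeastI[of _ n]) (rule n)
  have "j0 \<noteq> 0"
  proof
    assume "j0 = 0" with j0 assms show False by simp
  qed
  then obtain j where j: "j0 = Suc j" by (cases j0) auto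
  have "\<not> (1/2::real)^j < t" using not_less_Least[of j "\<lambda>n. (1/2::real)^n < t"] j j0_def by auto
  then show ?thesis using j j0 by (intro exI[of _ j]) auto
qed

definition rsplit :: "real \<Rightarrow> real \<Rightarrow> nat \<Rightarrow> real \<times> real" where
  "rsplit a b j = (b - (b-a)*(1/2)^j, b - (b-a)*(1/2)^Suc j)"
definition lsplit :: "real \<Rightarrow> real \<Rightarrow> nat \<Rightarrow> real \<times> real" where
  "lsplit a b j = (a + (b-a)*(1/2)^Suc j, a + (b-a)*(1/2)^j)"

lemma wlem:
  assumes "a < (b::real)"
  shows "0 < (b-a)*(1/2)^j" "(b-a)*(1/2)^j \<le> b - a"
    "(b-a)*(1/2)^Suc j = (b-a)*(1/2)^j / 2"
    "i \<le> j \<Longrightarrow> (b-a)*(1/2::real)^j \<le> (b-a)*(1/2)^i"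
proof -
  show "0 < (b-a)*(1/2)^j" using assms by simp
  have "(1/2::real)^j \<le> 1" by (simp add: power_le_one)
  then show "(b-a)*(1/2)^j \<le> b - a" using mult_left_mono[of "(1/2::real)^j" 1 "b-a"] assms by simp
  show "(b-a)*(1/2)^Suc j = (b-a)*(1/2::real)^j / 2" by simp
  assume "i \<le> j"
  then have "(1/2::real)^j \<le> (1/2)^i" by (intro power_decreasing) auto
  then show "(b-a)*(1/2::real)^j \<le> (b-a)*(1/2)^i" using assms by (intro mult_left_mono) auto
qed

lemma r_sub: assumes "a < b"
  shows "a \<le> fst (rsplit a b j)" "snd (rsplit a b j) < b" "fst (rsplit a b j) < snd (rsplit a b j)"
  using wlem(1-3)[OF assms, of j] wlem(1-3)[OF assms, of "Suc j"] unfolding rsplit_def prod.sel by linarith+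

lemma r_len: assumes "a < b"
  shows "snd (rsplit a b j) - fst (rsplit a b j) \<le> (b - a)/2"
  proof -
  define P where "P = (b-a)*(1/2::real)^j"
  define Q where "Q = (b-a)*(1/2::real)^Suc j"
  have "Q = P/2" "P \<le> b - a" using wlem(2,3)[OF assms, of j] unfolding P_def Q_def by auto
  moreover have "snd (rsplit a b j) - fst (rsplit a b j) = P - Q" unfolding rsplit_def P_def Q_def by simp
  ultimately show ?thesis by argo
qed

lemma r_mono: assumes "a < b" "i < j"
  shows "snd (rsplit a b i) \<le> fst (rsplit a b j)"
  using wlem(4)[OF assms(1), of "Suc i" j] assms(2) unfolding rsplit_def prod.sel by linarith

lemma r_disj: assumes "a < b" "i \<noteq> j"
  shows "{fst (rsplit a b i)..<snd (rsplit a b i)} \<inter> {fst (rsplit a b j)..<snd (rsplit a b j)} = {}"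
  using r_mono[OF assms(1), of i j] r_mono[OF assms(1), of j i] assms(2)
  by (cases "i < j") auto

lemma r_cover: assumes "a \<le> x" "x < b"
  shows "\<exists>j. x \<in> {fst (rsplit a b j)..<snd (rsplit a b j)}"
proof -
  define t where "t = (b - x)/(b - a)"
  have ba: "b - a > 0" using assms by auto
  have t0: "0 < t" "t \<le> 1" using assms by (auto simp: t_def)
  have bx: "b - x = (b-a)*t" using ba by (simp add: t_def)
  obtain j where j: "(1/2)^Suc j < t" "t \<le> (1/2::real)^j" using dyadic_exists[OF t0] by auto
  have "(b-a)*(1/2::real)^Suc j < (b-a)*t" using j ba by (intro mult_strict_left_mono) auto
  moreover have "(b-a)*t \<le> (b-a)*(1/2::real)^j" using j ba by (intro mult_left_mono) auto
  ultimately show ?thesis using bx unfolding rsplit_def prod.sel atLeastLessThan_iff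
    by (intro exI[of _ j]) linarith
qed

lemma r_tail: assumes "a < b" "p < b"
  shows "\<exists>J. \<forall>j\<ge>J. p \<le> fst (rsplit a b j)"
proof -
  have ba: "b - a > 0" using assms by auto
  obtain J where J: "(1/2::real)^J < (b - p)/(b-a)"
    using real_arch_pow_inv[of "(b - p)/(b-a)" "1/2"] assms by auto
  have "(b-a)*(1/2::real)^J < (b-a)*((b - p)/(b-a))" using J ba by (intro mult_strict_left_mono) auto
  then have J2: "(b-a)*(1/2::real)^J < b - p" using ba by simp
  show ?thesis
  proof (intro exI allI impI)
    fix j assume "J \<le> j"
    then show "p \<le> fst (rsplit a b j)" using J2 wlem(4)[OF assms(1), of J j]
      unfolding rsplit_def prod.sel by linarith
  qed
qed

lemma l_sub: assumes "a < b"
  shows "a < fst (lsplit a b j)" "snd (lsplit a b j) \<le> b" "fst (lsplit a b j) < snd (lsplit a b j)"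
  using wlem(1-3)[OF assms, of j] wlem(1-3)[OF assms, of "Suc j"] unfolding lsplit_def prod.sel by linarith+

lemma l_len: assumes "a < b"
  shows "snd (lsplit a b j) - fst (lsplit a b j) \<le> (b - a)/2"
  proof -
  define P where "P = (b-a)*(1/2::real)^j"
  define Q where "Q = (b-a)*(1/2::real)^Suc j"
  have "Q = P/2" "P \<le> b - a" using wlem(2,3)[OF assms, of j] unfolding P_def Q_def by auto
  moreover have "snd (lsplit a b j) - fst (lsplit a b j) = P - Q" unfolding lsplit_def P_def Q_def by simp
  ultimately show ?thesis by argo
qed

lemma l_mono: assumes "a < b" "i < j"
  shows "snd (lsplit a b j) \<le> fst (lsplit a b i)"
  using wlem(4)[OF assms(1), of "Suc i" j] assms(2) unfolding lsplit_def prod.sel by linarith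

lemma l_disj: assumes "a < b" "i \<noteq> j"
  shows "{fst (lsplit a b i)..<snd (lsplit a b i)} \<inter> {fst (lsplit a b j)..<snd (lsplit a b j)} = {}"
  using l_mono[OF assms(1), of i j] l_mono[OF assms(1), of j i] assms(2)
  by (cases "i < j") auto

lemma l_cover: assumes "a < x" "x < b"
  shows "\<exists>j. x \<in> {fst (lsplit a b j)..<snd (lsplit a b j)}"
proof -
  define t where "t = (x - a)/(b - a)"
  have ba: "b - a > 0" using assms by auto
  have t0: "0 < t" "t < 1" using assms by (auto simp: t_def)
  have bx: "x - a = (b-a)*t" using ba by (simp add: t_def)
  obtain j where j: "(1/2)^Suc j < t" "t \<le> (1/2::real)^j" using dyadic_exists[of t] t0 by auto
  have A: "(b-a)*(1/2::real)^Suc j < (b-a)*t" using j ba by (intro mult_strict_left_mono) auto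
  have B: "(b-a)*t \<le> (b-a)*(1/2::real)^j" using j ba by (intro mult_left_mono) auto
  show ?thesis
  proof (cases "t = (1/2)^j")
    case False
    then have "(b-a)*t < (b-a)*(1/2::real)^j" using j ba by (intro mult_strict_left_mono) auto
    then show ?thesis using A bx unfolding lsplit_def prod.sel atLeastLessThan_iff
      by (intro exI[of _ j]) linarith
  next
    case True
    have "j \<noteq> 0"
    proof
      assume "j = 0" with True t0 show False by simp
    qed
    then obtain i where i: "j = Suc i" by (cases j) auto
    define P where "P = (b-a)*(1/2::real)^i"
    have "(b-a)*(1/2::real)^j = P/2" unfolding P_def i by simp
    moreover have "x - a = (b-a)*(1/2::real)^j" using True bx by simp
    moreover have "P > 0" unfolding P_def using ba by simp
    ultimately have "a + P/2 \<le> x" "x < a + P" by linarith+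
    then show ?thesis unfolding lsplit_def prod.sel atLeastLessThan_iff P_def by (intro exI[of _ i]) simp
  qed
qed


definition dsplit :: "real \<Rightarrow> real \<Rightarrow> real \<Rightarrow> nat \<Rightarrow> real \<times> real" where
  "dsplit a b d j = (if a < d \<and> d < b then (if even j then rsplit a d (j div 2) else lsplit d b (j div 2))
     else if d = a then lsplit a b j else rsplit a b j)"

lemma d_sub: assumes "a < b"
  shows "a \<le> fst (dsplit a b d j) \<and> snd (dsplit a b d j) \<le> b \<and> fst (dsplit a b d j) < snd (dsplit a b d j)"
proof (cases "a < d \<and> d < b")
  case True
  then show ?thesis
    using r_sub[of a d "j div 2"] l_sub[of d b "j div 2"] by (auto simp: dsplit_def)
next
  case False
  then show ?thesis using r_sub[OF assms, of j] l_sub[OF assms, of j] by (auto simp: dsplit_def)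
qed

lemma d_len: assumes "a < b"
  shows "snd (dsplit a b d j) - fst (dsplit a b d j) \<le> (b - a)/2"
proof (cases "a < d \<and> d < b")
  case True
  then show ?thesis
    using r_len[of a d "j div 2"] l_len[of d b "j div 2"] by (auto simp: dsplit_def)
next
  case False
  then show ?thesis using r_len[OF assms, of j] l_len[OF assms, of j] by (auto simp: dsplit_def)
qed

lemma d_disj: assumes "a < b" "i \<noteq> j"
  shows "{fst (dsplit a b d i)..<snd (dsplit a b d i)} \<inter> {fst (dsplit a b d j)..<snd (dsplit a b d j)} = {}"
proof (cases "a < d \<and> d < b")
  case True
  have ij: "even i = even j \<Longrightarrow> i div 2 \<noteq> j div 2" using assms(2)
    by (metis dvd_mult_div_cancel odd_two_times_div_two_succ)
  show ?thesis
  proof (cases "even i = even j")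
    case True2: True
    then show ?thesis using True ij[OF True2] r_disj[of a d "i div 2" "j div 2"] l_disj[of d b "i div 2" "j div 2"]
      by (auto simp: dsplit_def)
  next
    case False2: False
    have "snd (rsplit a d k) < d" "d < fst (lsplit d b k)" for k
      using r_sub[of a d k] l_sub[of d b k] True by auto
    note h = this
    show ?thesis using True False2 h(1)[of "i div 2"] h(1)[of "j div 2"] h(2)[of "i div 2"] h(2)[of "j div 2"]
      by (cases "even i") (auto simp: dsplit_def)
  qed
next
  case False
  then show ?thesis using r_disj[OF assms] l_disj[OF assms] by (auto simp: dsplit_def)
qed

lemma d_cover: assumes "a \<le> x" "x < b" "x \<noteq> d"
  shows "\<exists>j. x \<in> {fst (dsplit a b d j)..<snd (dsplit a b d j)}"
proof (cases "a < d \<and> d < b")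
  case True
  show ?thesis
  proof (cases "x < d")
    case True2: True
    obtain i where "x \<in> {fst (rsplit a d i)..<snd (rsplit a d i)}" using r_cover[of a x d] assms True2 by auto
    then show ?thesis using True by (intro exI[of _ "2*i"]) (auto simp: dsplit_def)
  next
    case False2: False
    then have "d < x" using assms by auto
    then obtain i where "x \<in> {fst (lsplit d b i)..<snd (lsplit d b i)}" using l_cover[of d x b] assms by auto
    then show ?thesis using True by (intro exI[of _ "2*i+1"]) (auto simp: dsplit_def)
  qed
next
  case False
  show ?thesis
  proof (cases "d = a")
    case True
    then have "a < x" using assms by auto
    then obtain i where "x \<in> {fst (lsplit a b i)..<snd (lsplit a b i)}" using l_cover[of a x b] assms by auto
    then show ?thesis using True False by (intro exI[of _ i]) (auto simp: dsplit_def)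
  next
    case False2: False
    obtain i where "x \<in> {fst (rsplit a b i)..<snd (rsplit a b i)}" using r_cover[of a x b] assms by auto
    then show ?thesis using False False2 by (intro exI[of _ i]) (auto simp: dsplit_def)
  qed
qed

lemma d_avoid: assumes "a < b"
  shows "d \<notin> {fst (dsplit a b d j)..<snd (dsplit a b d j)}"
proof (cases "a < d \<and> d < b")
  case True
  then show ?thesis
    using r_sub[of a d "j div 2"] l_sub[of d b "j div 2"] by (auto simp: dsplit_def)
next
  case False
  then show ?thesis using r_sub[OF assms, of j] l_sub[OF assms, of j] by (auto simp: dsplit_def)
qed


definition spl :: "(nat \<Rightarrow> real option) \<Rightarrow> nat \<Rightarrow> real \<times> real \<Rightarrow> nat \<Rightarrow> real \<times> real" where
  "spl lev n c j = (case lev n of None \<Rightarrow> rsplit (fst c) (snd c) j | Some d \<Rightarrow> dsplit (fst c) (snd c) d j)"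

abbreviation ivl :: "real \<times> real \<Rightarrow> real set" where
  "ivl c \<equiv> {fst c..<snd c}"

lemma s_sub: assumes "fst c < snd c"
  shows "fst c \<le> fst (spl lev n c j)" "snd (spl lev n c j) \<le> snd c" "fst (spl lev n c j) < snd (spl lev n c j)"
  using r_sub[OF assms, of j] d_sub[OF assms, of _ j] by (auto simp: spl_def split: option.splits)

lemma s_len: assumes "fst c < snd c"
  shows "snd (spl lev n c j) - fst (spl lev n c j) \<le> (snd c - fst c)/2"
  using r_len[OF assms, of j] d_len[OF assms, of _ j] by (auto simp: spl_def split: option.splits)

lemma s_disj: assumes "fst c < snd c" "i \<noteq> j"
  shows "ivl (spl lev n c i) \<inter> ivl (spl lev n c j) = {}"
  using r_disj[OF assms] d_disj[OF assms] by (auto simp: spl_def split: option.splits)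

lemma s_cover: assumes "x \<in> ivl c" "\<And>d. lev n = Some d \<Longrightarrow> x \<noteq> d"
  shows "\<exists>j. x \<in> ivl (spl lev n c j)"
proof (cases "lev n")
  case None
  then show ?thesis using r_cover[of "fst c" x "snd c"] assms by (auto simp: spl_def)
next
  case (Some d)
  then show ?thesis using d_cover[of "fst c" x "snd c" d] assms by (auto simp: spl_def)
qed

lemma s_avoid: assumes "fst c < snd c" "lev n = Some d"
  shows "d \<notin> ivl (spl lev n c j)"
  using d_avoid[OF assms(1), of d j] assms(2) by (auto simp: spl_def)

lemma s_none: assumes "fst c < snd c" "lev n = None"
  shows "snd (spl lev n c j) < snd c"
  using r_sub[OF assms(1), of j] assms(2) by (auto simp: spl_def)

lemma s_tail: assumes "fst c < snd c" "lev n = None" "p < snd c"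
  shows "\<exists>J. \<forall>j\<ge>J. p \<le> fst (spl lev n c j)"
  using r_tail[OF assms(1,3)] assms(2) by (auto simp: spl_def)

definition rootiv :: "nat \<Rightarrow> real \<times> real" where
  "rootiv j = (of_int (int_decode j), of_int (int_decode j) + 1)"

fun ivr :: "(nat \<Rightarrow> real option) \<Rightarrow> nat list \<Rightarrow> real \<times> real" where
  "ivr lev [] = (0,1)"
| "ivr lev [j] = rootiv j"
| "ivr lev (j # k # r) = spl lev (Suc (length r)) (ivr lev (k # r)) j"

definition iv :: "(nat \<Rightarrow> real option) \<Rightarrow> nat list \<Rightarrow> real \<times> real" where
  "iv lev s = ivr lev (rev s)"

definition FF :: "(nat \<Rightarrow> real option) \<Rightarrow> real set \<Rightarrow> nat list \<Rightarrow> real set" where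
  "FF lev X s = (if s = [] then X else X \<inter> ivl (iv lev s))"

lemma iv_snoc: "iv lev (s @ [j]) = (if s = [] then rootiv j else spl lev (length s) (iv lev s) j)"
proof (cases "rev s")
  case Nil
  then show ?thesis by (simp add: iv_def)
next
  case (Cons k r)
  then have "s = rev r @ [k]" by (metis rev_rev_ident rev.simps(2))
  then show ?thesis using Cons by (simp add: iv_def)
qed

lemma iv_single[simp]: "iv lev [j] = rootiv j"
  by (simp add: iv_def)

lemma iv_lt: "s \<noteq> [] \<Longrightarrow> fst (iv lev s) < snd (iv lev s) \<and> snd (iv lev s) - fst (iv lev s) \<le> (1/2)^(length s - 1)"
proof (induction s rule: rev_induct)
  case Nil
  then show ?case by simp
next
  case (snoc j s)
  show ?case
  proof (cases "s = []")
    case True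
    then show ?thesis by (simp add: iv_def rootiv_def)
  next
    case False
    then have IH: "fst (iv lev s) < snd (iv lev s)" "snd (iv lev s) - fst (iv lev s) \<le> (1/2)^(length s - 1)"
      using snoc.IH by auto
    have "length s - 1 + 1 = length s" using False by (cases s) auto
    then have e: "(1/2::real)^(length s) = (1/2)^(length s - 1) / 2" by (metis power_Suc2 Suc_eq_plus1 divide_inverse inverse_eq_divide mult.commute times_divide_eq_right mult_1_left)
    show ?thesis using s_sub(3)[OF IH(1), of lev "length s" j] s_len[OF IH(1), of lev "length s" j] IH(2) False e
      by (simp add: iv_snoc)
  qed
qed

lemma nonempty_ivl:
  assumes "countable (UNIV - X)" "a < (b::real)"
  shows "\<exists>x\<in>X. a \<le> x \<and> x < b"
proof (rule ccontr)
  assume "\<not> ?thesis"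
  then have "{a<..<b} \<subseteq> UNIV - X" by auto
  then have "countable {a<..<b}" using assms(1) countable_subset by blast
  then show False using uncountable_open_interval[of a b] assms(2) by simp
qed


definition goodlev :: "real set \<Rightarrow> (nat \<Rightarrow> real option) \<Rightarrow> bool" where
  "goodlev X lev \<longleftrightarrow> (\<forall>n d. lev n = Some d \<longrightarrow> d \<notin> X) \<and> (\<forall>y. y \<notin> X \<longrightarrow> (\<exists>n\<ge>1. lev n = Some y))
     \<and> (\<forall>N. \<exists>n\<ge>N. lev n = None)"

lemma FF_sub: "FF lev X (s @ [j]) \<subseteq> FF lev X s"
proof (cases "s = []")
  case True
  then show ?thesis by (auto simp: FF_def)
next
  case False
  have "fst (iv lev s) < snd (iv lev s)" using iv_lt[OF False] by auto
  from s_sub[OF this, of lev "length s" j] show ?thesis using False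
    by (auto simp: FF_def iv_snoc)
qed

lemma FF_cover:
  assumes "goodlev X lev" "x \<in> FF lev X s"
  shows "\<exists>j. x \<in> FF lev X (s @ [j])"
proof (cases "s = []")
  case True
  then have xX: "x \<in> X" using assms by (simp add: FF_def)
  have "x \<in> ivl (rootiv (int_encode \<lfloor>x\<rfloor>))" by (simp add: rootiv_def)
  then show ?thesis using True xX by (intro exI[of _ "int_encode \<lfloor>x\<rfloor>"]) (simp add: FF_def iv_snoc)
next
  case False
  then have xX: "x \<in> X" "x \<in> ivl (iv lev s)" using assms by (auto simp: FF_def)
  have "\<And>d. lev (length s) = Some d \<Longrightarrow> x \<noteq> d" using assms(1) xX(1) unfolding goodlev_def by auto
  from s_cover[OF xX(2) this] obtain j where "x \<in> ivl (spl lev (length s) (iv lev s) j)" by blast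
  then show ?thesis using False xX by (intro exI[of _ j]) (simp add: FF_def iv_snoc)
qed

lemma FF_disj:
  assumes "i \<noteq> j"
  shows "FF lev X (s @ [i]) \<inter> FF lev X (s @ [j]) = {}"
proof (cases "s = []")
  case True
  have "int_decode i \<noteq> int_decode j" using assms bij_int_decode by (metis int_decode_inverse)
  have H: "ivl (rootiv i) \<inter> ivl (rootiv j) = {}"
  proof (rule ccontr)
    assume "ivl (rootiv i) \<inter> ivl (rootiv j) \<noteq> {}"
    then obtain x where "x \<in> ivl (rootiv i)" "x \<in> ivl (rootiv j)" by blast
    then have "\<lfloor>x\<rfloor> = int_decode i" "\<lfloor>x\<rfloor> = int_decode j" by (auto simp: rootiv_def floor_eq_iff)
    then show False using \<open>int_decode i \<noteq> int_decode j\<close> by simp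
  qed
  show ?thesis using True H by (auto simp: FF_def)
next
  case False
  have "fst (iv lev s) < snd (iv lev s)" using iv_lt[OF False] by auto
  from s_disj[OF this assms, of lev "length s"] show ?thesis using False
    by (auto simp: FF_def iv_snoc)
qed

lemma FF_ne:
  assumes "countable (UNIV - X)"
  shows "FF lev X s \<noteq> {}"
proof (cases "s = []")
  case False
  have "fst (iv lev s) < snd (iv lev s)" using iv_lt[OF False] by auto
  from nonempty_ivl[OF assms this] show ?thesis using False by (auto simp: FF_def)
next
  case True
  have "fst (iv lev [0]) < snd (iv lev [0])" using iv_lt[of "[0]"] by auto
  from nonempty_ivl[OF assms this] show ?thesis using True by (auto simp: FF_def)
qed

lemma exists_node:
  assumes "goodlev X lev" "p \<in> X"
  shows "\<exists>v. length v = n \<and> p \<in> FF lev X v"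
proof (induction n)
  case 0
  then show ?case using assms by (intro exI[of _ "[]"]) (simp add: FF_def)
next
  case (Suc n)
  then obtain v where "length v = n" "p \<in> FF lev X v" by blast
  moreover obtain j where "p \<in> FF lev X (v @ [j])" using FF_cover[OF assms(1) \<open>p \<in> FF lev X v\<close>] by blast
  ultimately show ?case by (intro exI[of _ "v @ [j]"]) simp
qed


lemma branch:
  assumes cX: "countable (UNIV - X)" and g: "goodlev X lev"
  shows "\<exists>q. (\<Inter>k. FF lev X (map f [0..<k])) = {q}"
proof -
  define s where "s k = map f [0..<k]" for k
  have sS: "s (Suc k) = s k @ [f k]" for k by (simp add: s_def)
  have ne: "s (Suc k) \<noteq> []" for k by (simp add: s_def)
  have len: "length (s k) = k" for k by (simp add: s_def)
  define A where "A k = fst (iv lev (s (Suc k)))" for k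
  define B where "B k = snd (iv lev (s (Suc k)))" for k
  have AB: "A k < B k" "B k - A k \<le> (1/2)^k" for k
    using iv_lt[OF ne[of k], of lev] len[of "Suc k"] by (auto simp: A_def B_def)
  have ivS: "iv lev (s (Suc (Suc k))) = spl lev (Suc k) (iv lev (s (Suc k))) (f (Suc k))" for k
    using iv_snoc[of lev "s (Suc k)" "f (Suc k)"] ne[of k] len[of "Suc k"] sS[of "Suc k"] by simp
  have lt: "fst (iv lev (s (Suc k))) < snd (iv lev (s (Suc k)))" for k using AB(1) by (simp add: A_def B_def)
  have Astep: "A k \<le> A (Suc k)" and Bstep: "B (Suc k) \<le> B k" for k
    using s_sub(1,2)[OF lt[of k], of lev "Suc k" "f (Suc k)"] ivS[of k] by (auto simp: A_def B_def)
  have Bnone: "lev (Suc k) = None \<Longrightarrow> B (Suc k) < B k" for k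
    using s_none[OF lt[of k], of lev "Suc k" "f (Suc k)"] ivS[of k] by (auto simp: A_def B_def)
  have Aavoid: "lev (Suc k) = Some d \<Longrightarrow> \<not> (A (Suc k) \<le> d \<and> d < B (Suc k))" for k d
    using s_avoid[OF lt[of k], of lev "Suc k" d "f (Suc k)"] ivS[of k] by (auto simp: A_def B_def)
  have incA: "incseq A" using Astep by (rule incseq_SucI)
  have decB: "decseq B" using Bstep by (rule decseq_SucI)
  have AleB: "A i \<le> B j" for i j
  proof -
    have "A i \<le> A (max i j)" using incA by (simp add: incseq_def)
    moreover have "B (max i j) \<le> B j" using decB by (simp add: decseq_def)
    ultimately show ?thesis using AB(1)[of "max i j"] by linarith
  qed
  define c where "c = Sup (range A)"
  have bdd: "bdd_above (range A)" using AleB[of _ 0] by (intro bdd_aboveI[of _ "B 0"]) auto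
  have cA: "A k \<le> c" for k unfolding c_def by (rule cSup_upper[OF _ bdd]) simp
  have cB: "c \<le> B k" for k unfolding c_def by (rule cSup_least) (auto simp: AleB)
  have cBs: "c < B k" for k
  proof -
    obtain n where n: "n \<ge> Suc k" "lev n = None" using g unfolding goodlev_def by blast
    then obtain m where m: "n = Suc m" "m \<ge> k" by (cases n) auto
    have "B (Suc m) < B m" using Bnone n m by simp
    moreover have "B m \<le> B k" using decB m by (simp add: decseq_def)
    ultimately show ?thesis using cB[of "Suc m"] by linarith
  qed
  have cXm: "c \<in> X"
  proof (rule ccontr)
    assume "c \<notin> X"
    then obtain n where n: "n \<ge> 1" "lev n = Some c" using g unfolding goodlev_def by blast
    then obtain m where m: "n = Suc m" by (cases n) auto
    show False using Aavoid[of m c] n m cA[of "Suc m"] cBs[of "Suc m"] by simp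
  qed
  have FFS: "FF lev X (s (Suc m)) = X \<inter> {A m..<B m}" for m
    using ne[of m] by (simp add: FF_def A_def B_def)
  have "(\<Inter>k. FF lev X (s k)) = {c}"
  proof
    show "{c} \<subseteq> (\<Inter>k. FF lev X (s k))"
    proof (clarsimp)
      fix k show "c \<in> FF lev X (s k)"
      proof (cases k)
        case 0
        then show ?thesis using cXm by (simp add: s_def FF_def)
      next
        case (Suc m)
        then show ?thesis using cXm cA[of m] cBs[of m] FFS[of m] by simp
      qed
    qed
  next
    show "(\<Inter>k. FF lev X (s k)) \<subseteq> {c}"
    proof
      fix x assume x: "x \<in> (\<Inter>k. FF lev X (s k))"
      then have xk: "A k \<le> x \<and> x < B k" for k using FFS[of k] by auto
      show "x \<in> {c}"
      proof (rule ccontr)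
        assume "x \<notin> {c}"
        then have "0 < \<bar>x - c\<bar>" by simp
        then obtain k where k: "(1/2::real)^k < \<bar>x - c\<bar>" using real_arch_pow_inv[of "\<bar>x - c\<bar>" "1/2"] by auto
        have "\<bar>x - c\<bar> < B k - A k" using xk[of k] cA[of k] cBs[of k] by linarith
        then show False using AB(2)[of k] k by linarith
      qed
    qed
  qed
  then show ?thesis unfolding s_def by blast
qed


lemma sorg_open_imp:
  assumes "openin sorgenfrey W"
  shows "\<forall>x\<in>W. \<exists>e>0. {x..<x+e} \<subseteq> W"
proof -
  have "generate_topology_on {{a..<b} | a b. True} W"
    using assms unfolding sorgenfrey_def by (simp add: openin_topology_generated_by_iff)
  then show ?thesis
  proof (induction rule: generate_topology_on.induct)
    case Empty
    then show ?case by simp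
  next
    case (Int a b)
    show ?case
    proof
      fix x assume "x \<in> a \<inter> b"
      then obtain e1 e2 where "e1 > 0" "{x..<x+e1} \<subseteq> a" "e2 > 0" "{x..<x+e2} \<subseteq> b"
        using Int.IH by blast
      moreover have "{x..<x+min e1 e2} \<subseteq> {x..<x+e1}" "{x..<x+min e1 e2} \<subseteq> {x..<x+e2}" by auto
      ultimately have "{x..<x+min e1 e2} \<subseteq> a \<inter> b" by blast
      then show "\<exists>e>0. {x..<x+e} \<subseteq> a \<inter> b" using \<open>e1 > 0\<close> \<open>e2 > 0\<close> by (intro exI[of _ "min e1 e2"]) auto
    qed
  next
    case (UN K)
    show ?case
    proof
      fix x assume "x \<in> \<Union>K"
      then obtain k where "k \<in> K" "x \<in> k" by blast
      then obtain e where "e > 0" "{x..<x+e} \<subseteq> k" using UN.IH by blast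
      then show "\<exists>e>0. {x..<x+e} \<subseteq> \<Union>K" using \<open>k \<in> K\<close> by blast
    qed
  next
    case (Basis s)
    then obtain a b where s: "s = {a..<b}" by blast
    show ?case
    proof
      fix x assume "x \<in> s"
      then show "\<exists>e>0. {x..<x+e} \<subseteq> s" using s by (intro exI[of _ "b - x"]) auto
    qed
  qed
qed

lemma sorg_topspace: "topspace sorgenfrey = UNIV"
proof -
  have "x \<in> \<Union>{{a..<b} | a b. True}" for x :: real
    by (rule UnionI[of "{x..<x+1}"]) auto
  then show ?thesis unfolding sorgenfrey_def topology_generated_by_topspace by blast
qed

lemma sorg_basis: "openin sorgenfrey {a..<b}"
  unfolding sorgenfrey_def by (rule topology_generated_by_Basis) blast

lemma nbhd_sub:
  assumes "nbhd (subtopology sorgenfrey X) p U"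
  shows "\<exists>e>0. X \<inter> {p..<p+e} \<subseteq> U"
proof -
  obtain V where V: "openin (subtopology sorgenfrey X) V" "p \<in> V" "V \<subseteq> U"
    using assms unfolding nbhd_def by blast
  then obtain W where W: "openin sorgenfrey W" "V = W \<inter> X" by (auto simp: openin_subtopology)
  then obtain e where "e > 0" "{p..<p+e} \<subseteq> W" using sorg_open_imp[OF W(1)] V(2) by blast
  then show ?thesis using V W by (intro exI[of _ e]) auto
qed

lemma shoot_good:
  assumes cX: "countable (UNIV - X)" and g: "goodlev X lev"
    and p: "p \<in> FF lev X v" and v: "v \<noteq> []" and lv: "lev (length v) = None"
    and U: "X \<inter> {p..<p+e} \<subseteq> U" and sb: "snd (iv lev v) \<le> p + e"
  shows "shoot (FF lev X) v \<ggreater> {U}"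
proof -
  define c where "c = iv lev v"
  have lt: "fst c < snd c" using iv_lt[OF v] by (simp add: c_def)
  have pc: "p \<in> X" "fst c \<le> p" "p < snd c" using p v by (auto simp: FF_def c_def)
  obtain J where J: "\<forall>j\<ge>J. p \<le> fst (spl lev (length v) c j)" using s_tail[of c lev "length v" p, OF lt lv pc(3)] by blast
  define C where "C = sons v - (\<lambda>j. v @ [j]) ` {..<J}"
  have Cc: "C \<in> cofin (sons v)" unfolding cofin_def C_def
    by (rule CollectI, rule exI[of _ "(\<lambda>j. v @ [j]) ` {..<J}"]) (auto simp: sons_def)
  define G where "G = (\<Union>x\<in>C. FF lev X x)"
  have Gs: "G \<in> shoot (FF lev X) v" unfolding shoot_def G_def using Cc by blast
  have GU: "G \<subseteq> U"
  proof
    fix x assume "x \<in> G"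
    then obtain y where y: "y \<in> C" "x \<in> FF lev X y" unfolding G_def by blast
    then obtain j where yj: "y = v @ [j]" unfolding C_def sons_def by blast
    have "j \<ge> J"
    proof (rule ccontr)
      assume "\<not> J \<le> j" then have "y \<in> (\<lambda>j. v @ [j]) ` {..<J}" using yj by auto
      then show False using y(1) unfolding C_def by blast
    qed
    then have j: "j \<ge> J" "x \<in> FF lev X (v @ [j])" using y yj by auto
    have "fst c \<le> fst (spl lev (length v) c j)" "snd (spl lev (length v) c j) \<le> snd c"
      using s_sub[OF lt] by auto
    moreover have "x \<in> X" "x \<in> ivl (spl lev (length v) c j)"
      using j(2) v by (auto simp: FF_def iv_snoc c_def)
    ultimately have "x \<in> X \<inter> {p..<p+e}" using J j(1) sb unfolding c_def by fastforce
    then show "x \<in> U" using U by blast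
  qed
  have "v @ [J] \<in> C" unfolding C_def sons_def by auto
  then have "G \<noteq> {}" using FF_ne[OF cX, of lev "v @ [J]"] unfolding G_def by blast
  then show ?thesis unfolding refines_def using Gs GU by blast
qed

lemma level_good:
  assumes cX: "countable (UNIV - X)" and g: "goodlev X lev"
    and p: "p \<in> X" and nb: "nbhd (subtopology sorgenfrey X) p U"
  shows "\<exists>N. \<forall>n\<ge>N. lev n = None \<longrightarrow> (\<exists>v. length v = n \<and> v \<in> scope (FF lev X) p \<and> shoot (FF lev X) v \<ggreater> {U})"
proof -
  obtain e where e: "e > 0" "X \<inter> {p..<p+e} \<subseteq> U" using nbhd_sub[OF nb] by blast
  obtain K where K: "(1/2::real)^K < e" using real_arch_pow_inv[OF e(1), of "1/2"] by auto
  show ?thesis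
  proof (intro exI[of _ "Suc K"] allI impI)
    fix n assume n: "Suc K \<le> n" "lev n = None"
    obtain v where v: "length v = n" "p \<in> FF lev X v" using exists_node[OF g p] by blast
    have vne: "v \<noteq> []" using v n by auto
    have b: "snd (iv lev v) - fst (iv lev v) \<le> (1/2)^(n - 1)" using iv_lt[OF vne, of lev] v by simp
    have "(1/2::real)^(n-1) \<le> (1/2)^K" using n by (intro power_decreasing) auto
    moreover have "fst (iv lev v) \<le> p" using v vne by (simp add: FF_def)
    ultimately have "snd (iv lev v) \<le> p + e" using b K by linarith
    then have "shoot (FF lev X) v \<ggreater> {U}" using shoot_good[OF cX g v(2) vne] v n e by simp
    then show "\<exists>v. length v = n \<and> v \<in> scope (FF lev X) p \<and> shoot (FF lev X) v \<ggreater> {U}"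
      using v by (auto simp: scope_def)
  qed
qed

lemma tree_main:
  assumes cX: "countable (UNIV - X)" and g: "goodlev X lev"
  shows "pi_tree (subtopology sorgenfrey X) (FF lev X)"
    "\<And>p U. p \<in> topspace (subtopology sorgenfrey X) \<Longrightarrow> nbhd (subtopology sorgenfrey X) p U \<Longrightarrow>
      \<exists>N. \<forall>n\<ge>N. lev n = None \<longrightarrow> n \<in> rise (FF lev X) p U"
proof -
  have ts: "topspace (subtopology sorgenfrey X) = X" by (simp add: sorg_topspace)
  have op: "open_in_space (subtopology sorgenfrey X) (FF lev X)"
    unfolding open_in_space_def
  proof
    fix s show "openin (subtopology sorgenfrey X) (FF lev X s)"
    proof (cases "s = []")
      case True
      then show ?thesis using ts by (metis FF_def openin_topspace)
    next
      case False
      then show ?thesis unfolding openin_subtopology FF_def using sorg_basis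
        by (intro exI[of _ "ivl (iv lev s)"]) auto
    qed
  qed
  have ls: "locally_strict (FF lev X)"
    unfolding locally_strict_def
  proof
    fix x
    have "FF lev X x = (\<Union>s\<in>sons x. FF lev X s)"
    proof
      show "FF lev X x \<subseteq> (\<Union>s\<in>sons x. FF lev X s)"
        using FF_cover[OF g] unfolding sons_def by blast
      show "(\<Union>s\<in>sons x. FF lev X s) \<subseteq> FF lev X x"
        using FF_sub unfolding sons_def by blast
    qed
    moreover have "disjoint_family_on (FF lev X) (sons x)"
      unfolding disjoint_family_on_def
    proof (intro ballI impI)
      fix m n assume mn: "m \<in> sons x" "n \<in> sons x" "m \<noteq> n"
      then obtain i j where ij: "m = x @ [i]" "n = x @ [j]" unfolding sons_def by blast
      then have "i \<noteq> j" using mn by auto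
      then show "FF lev X m \<inter> FF lev X n = {}" unfolding ij by (rule FF_disj)
    qed
    ultimately show "FF lev X x = (\<Union>s\<in>sons x. FF lev X s) \<and> disjoint_family_on (FF lev X) (sons x)" by blast
  qed
  have sb: "strict_branches (FF lev X)" unfolding strict_branches_def using branch[OF cX g] by blast
  have gi: "grows_into (subtopology sorgenfrey X) (FF lev X)"
    unfolding grows_into_def
  proof (intro ballI allI impI)
    fix p U assume p: "p \<in> topspace (subtopology sorgenfrey X)" and nb: "nbhd (subtopology sorgenfrey X) p U"
    obtain N where N: "\<forall>n\<ge>N. lev n = None \<longrightarrow> (\<exists>v. length v = n \<and> v \<in> scope (FF lev X) p \<and> shoot (FF lev X) v \<ggreater> {U})"
      using level_good[OF cX g _ nb] p ts by auto
    obtain n where "n \<ge> N" "lev n = None" using g unfolding goodlev_def by blast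
    then show "\<exists>z\<in>scope (FF lev X) p. shoot (FF lev X) z \<ggreater> {U}" using N by blast
  qed
  show "pi_tree (subtopology sorgenfrey X) (FF lev X)"
    unfolding pi_tree_def baire_foliage_tree_def using op ls sb gi ts by (simp add: FF_def)
  fix p U assume p: "p \<in> topspace (subtopology sorgenfrey X)" and nb: "nbhd (subtopology sorgenfrey X) p U"
  obtain N where N: "\<forall>n\<ge>N. lev n = None \<longrightarrow> (\<exists>v. length v = n \<and> v \<in> scope (FF lev X) p \<and> shoot (FF lev X) v \<ggreater> {U})"
    using level_good[OF cX g _ nb] p ts by auto
  show "\<exists>N. \<forall>n\<ge>N. lev n = None \<longrightarrow> n \<in> rise (FF lev X) p U"
    using N unfolding rise_def by blast
qed




lemma refine_from:
  fixes B :: "nat set"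
  assumes "\<And>D. D \<in> R \<Longrightarrow> \<exists>N. \<forall>n\<in>B. n \<ge> N \<longrightarrow> n \<in> D"
    and "\<And>N. \<exists>m\<in>B. m \<ge> N"
  shows "cofin B \<ggreater> R"
  unfolding refines_def
proof (intro ballI impI)
  fix D assume "D \<in> R" "D \<noteq> {}"
  then obtain N where N: "\<forall>n\<in>B. n \<ge> N \<longrightarrow> n \<in> D" using assms(1)[OF \<open>D \<in> R\<close>] by blast
  define G where "G = B - {n \<in> B. n < N}"
  have fin: "finite {n \<in> B. n < N}" by (rule finite_subset[of _ "{..<N}"]) auto
  have "G \<in> cofin B" unfolding cofin_def
    by (rule CollectI, rule exI[of _ "{n \<in> B. n < N}"]) (simp add: G_def fin)
  moreover obtain m where "m \<in> B" "m \<ge> N" using assms(2) by blast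
  then have "G \<noteq> {}" unfolding G_def by auto
  moreover have "G \<subseteq> D" using N unfolding G_def by auto
  ultimately show "\<exists>G\<in>cofin B. G \<noteq> {} \<and> G \<subseteq> D" by blast
qed

definition cyl :: "nat list \<Rightarrow> (nat \<Rightarrow> nat) set" where
  "cyl s = {g. \<forall>i<length s. g i = s ! i}"

lemma baire_topspace: "topspace baire_space_top = UNIV"
  unfolding baire_space_top_def by simp

lemma cyl_open: "openin baire_space_top (cyl s)"
  unfolding baire_space_top_def openin_product_topology_alt
proof
  fix x assume x: "x \<in> cyl s"
  define U where "U i = (if i < length s then {s ! i} else UNIV)" for i
  have "finite {i \<in> UNIV. U i \<noteq> topspace (discrete_topology UNIV)}"
    by (rule finite_subset[of _ "{..<length s}"]) (auto simp: U_def)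
  moreover have "x \<in> Pi\<^sub>E UNIV U" using x by (auto simp: U_def cyl_def)
  moreover have "Pi\<^sub>E UNIV U \<subseteq> cyl s"
  proof
    fix y assume y: "y \<in> Pi\<^sub>E UNIV U"
    have "y i = s ! i" if "i < length s" for i
    proof -
      have "y i \<in> U i" using y by (auto simp: PiE_iff)
      then show ?thesis using that by (simp add: U_def)
    qed
    then show "y \<in> cyl s" by (simp add: cyl_def)
  qed
  moreover have "\<forall>i\<in>UNIV. openin (discrete_topology UNIV) (U i)" by simp
  ultimately show "\<exists>U. finite {i \<in> UNIV. U i \<noteq> topspace (discrete_topology UNIV)} \<and>
          (\<forall>i\<in>UNIV. openin (discrete_topology UNIV) (U i)) \<and> x \<in> Pi\<^sub>E UNIV U \<and> Pi\<^sub>E UNIV U \<subseteq> cyl s"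
    by blast
qed

lemma cyl_map: "cyl (map p [0..<k]) = {g. \<forall>i<k. g i = p i}"
  by (auto simp: cyl_def)

lemma nbhd_cyl:
  assumes "nbhd baire_space_top p U"
  shows "\<exists>k. cyl (map p [0..<k]) \<subseteq> U"
proof -
  obtain V where V: "openin baire_space_top V" "p \<in> V" "V \<subseteq> U" using assms unfolding nbhd_def by blast
  then obtain W where W: "finite {i \<in> UNIV. W i \<noteq> topspace (discrete_topology (UNIV::nat set))}"
    "p \<in> Pi\<^sub>E UNIV W" "Pi\<^sub>E UNIV W \<subseteq> V"
    unfolding baire_space_top_def openin_product_topology_alt by blast
  obtain k where k: "{i \<in> UNIV. W i \<noteq> topspace (discrete_topology (UNIV::nat set))} \<subseteq> {..<k}"
    using finite_nat_bounded[OF W(1)] by blast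
  have "cyl (map p [0..<k]) \<subseteq> Pi\<^sub>E UNIV W"
  proof
    fix g assume g: "g \<in> cyl (map p [0..<k])"
    have "g i \<in> W i" for i
    proof (cases "i < k")
      case True
      then show ?thesis using g W(2) by (auto simp: cyl_map PiE_iff)
    next
      case False
      then have "W i = UNIV" using k by auto
      then show ?thesis by simp
    qed
    then show "g \<in> Pi\<^sub>E UNIV W" by (auto simp: PiE_iff)
  qed
  then show ?thesis using W V by blast
qed

lemma cyl_split: "cyl s = (\<Union>t\<in>sons s. cyl t)"
proof
  show "cyl s \<subseteq> (\<Union>t\<in>sons s. cyl t)"
  proof
    fix g assume g: "g \<in> cyl s"
    have "g \<in> cyl (s @ [g (length s)])" using g by (auto simp: cyl_def nth_append less_Suc_eq)
    then show "g \<in> (\<Union>t\<in>sons s. cyl t)" unfolding sons_def by blast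
  qed
  show "(\<Union>t\<in>sons s. cyl t) \<subseteq> cyl s"
    unfolding sons_def cyl_def by (auto simp: nth_append)
qed

lemma shoot_all:
  assumes "F z = (\<Union>t\<in>sons z. F t)" "F z \<noteq> {}" "F z \<subseteq> U"
  shows "shoot F z \<ggreater> {U}"
proof -
  have "sons z \<in> cofin (sons z)" unfolding cofin_def by (rule CollectI, rule exI[of _ "{}"]) auto
  then have "F z \<in> shoot F z" unfolding shoot_def using assms(1) by blast
  then show ?thesis unfolding refines_def using assms by blast
qed

lemma baire_part:
  "pi_tree baire_space_top cyl \<and> cofin (UNIV::nat set) \<ggreater> Rise cyl baire_space_top"
proof -
  have ls: "locally_strict cyl" unfolding locally_strict_def
  proof
    fix x
    have "disjoint_family_on cyl (sons x)" unfolding disjoint_family_on_def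
    proof (intro ballI impI)
      fix m n assume mn: "m \<in> sons x" "n \<in> sons x" "m \<noteq> n"
      then obtain i j where ij: "m = x @ [i]" "n = x @ [j]" unfolding sons_def by blast
      then have "i \<noteq> j" using mn by auto
      show "cyl m \<inter> cyl n = {}"
      proof (rule ccontr)
        assume "cyl m \<inter> cyl n \<noteq> {}"
        then obtain g where g: "g \<in> cyl (x @ [i])" "g \<in> cyl (x @ [j])" unfolding ij by blast
        have "g (length x) = (x @ [i]) ! length x" using g(1) unfolding cyl_def by simp
        moreover have "g (length x) = (x @ [j]) ! length x" using g(2) unfolding cyl_def by simp
        ultimately show False using \<open>i \<noteq> j\<close> by simp
      qed
    qed
    then show "cyl x = (\<Union>s\<in>sons x. cyl s) \<and> disjoint_family_on cyl (sons x)" using cyl_split by blast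
  qed
  have sb: "strict_branches cyl" unfolding strict_branches_def
  proof
    fix f :: "nat \<Rightarrow> nat"
    have "(\<Inter>k. cyl (map f [0..<k])) = {f}"
    proof
      show "(\<Inter>k. cyl (map f [0..<k])) \<subseteq> {f}"
      proof
        fix g assume "g \<in> (\<Inter>k. cyl (map f [0..<k]))"
        then have "g i = f i" for i using cyl_map[of f "Suc i"] by blast
        then show "g \<in> {f}" by auto
      qed
    qed (auto simp: cyl_map)
    then show "\<exists>q. (\<Inter>k. cyl (map f [0..<k])) = {q}" by blast
  qed
  have key: "\<exists>k. \<forall>n\<ge>k. map p [0..<n] \<in> scope cyl p \<and> shoot cyl (map p [0..<n]) \<ggreater> {U}"
    if nb: "nbhd baire_space_top p U" for p U
  proof -
    obtain k where k: "cyl (map p [0..<k]) \<subseteq> U" using nbhd_cyl[OF nb] by blast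
    show ?thesis
    proof (intro exI[of _ k] allI impI conjI)
      fix n assume n: "k \<le> n"
      show "map p [0..<n] \<in> scope cyl p" by (auto simp: scope_def cyl_map)
      have "cyl (map p [0..<n]) \<subseteq> cyl (map p [0..<k])" using n by (auto simp: cyl_map)
      moreover have "p \<in> cyl (map p [0..<n])" by (simp add: cyl_map)
      ultimately have "cyl (map p [0..<n]) \<noteq> {}" "cyl (map p [0..<n]) \<subseteq> U" using k by blast+
      then show "shoot cyl (map p [0..<n]) \<ggreater> {U}" by (rule shoot_all[OF cyl_split])
    qed
  qed
  have gi: "grows_into baire_space_top cyl" unfolding grows_into_def
  proof (intro ballI allI impI)
    fix p U assume "p \<in> topspace baire_space_top" "nbhd baire_space_top p U"
    then obtain k where k: "\<forall>n\<ge>k. map p [0..<n] \<in> scope cyl p \<and> shoot cyl (map p [0..<n]) \<ggreater> {U}"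
      using key by blast
    then have "map p [0..<k] \<in> scope cyl p \<and> shoot cyl (map p [0..<k]) \<ggreater> {U}" by simp
    then show "\<exists>z\<in>scope cyl p. shoot cyl z \<ggreater> {U}" by blast
  qed
  have c0: "cyl [] = UNIV" by (simp add: cyl_def)
  have "open_in_space baire_space_top cyl" unfolding open_in_space_def using cyl_open by blast
  then have "pi_tree baire_space_top cyl" unfolding pi_tree_def baire_foliage_tree_def
    using ls sb gi baire_topspace c0 by (intro conjI) auto
  moreover have "cofin (UNIV::nat set) \<ggreater> Rise cyl baire_space_top"
  proof (rule refine_from)
    fix D assume "D \<in> Rise cyl baire_space_top"
    then obtain p U where D: "D = rise cyl p U" "nbhd baire_space_top p U" unfolding Rise_def by blast
    obtain k where "\<forall>n\<ge>k. map p [0..<n] \<in> scope cyl p \<and> shoot cyl (map p [0..<n]) \<ggreater> {U}"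
      using key[OF D(2)] by blast
    then have "\<forall>n\<in>UNIV. n \<ge> k \<longrightarrow> n \<in> D"
    proof (intro ballI impI)
      fix n assume "\<forall>n\<ge>k. map p [0..<n] \<in> scope cyl p \<and> shoot cyl (map p [0..<n]) \<ggreater> {U}" "k \<le> n"
      then have "map p [0..<n] \<in> scope cyl p \<and> shoot cyl (map p [0..<n]) \<ggreater> {U}" by blast
      moreover have "n = length (map p [0..<n])" by simp
      ultimately have "\<exists>v. n = length v \<and> v \<in> scope cyl p \<and> shoot cyl v \<ggreater> {U}" by blast
      then show "n \<in> D" unfolding D rise_def by (rule CollectI)
    qed
    then show "\<exists>N. \<forall>n\<in>UNIV. n \<ge> N \<longrightarrow> n \<in> D" by blast
  qed auto
  ultimately show ?thesis by blast
qed


theorem lemma19: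
  shows "(\<exists>F. pi_tree baire_space_top F \<and> cofin (UNIV::nat set) \<ggreater> Rise F baire_space_top)
    \<and> (\<exists>G. pi_tree sorgenfrey G \<and> cofin (UNIV::nat set) \<ggreater> Rise G sorgenfrey)
    \<and> (\<forall>X::real set. countable (UNIV - X) \<longrightarrow>
        (\<exists>H. pi_tree (subtopology sorgenfrey X) H \<and>
             cofin {2*n+1 | n::nat. True} \<ggreater> Rise H (subtopology sorgenfrey X)))"
proof (intro conjI allI impI)
  show "\<exists>F. pi_tree baire_space_top F \<and> cofin (UNIV::nat set) \<ggreater> Rise F baire_space_top"
    using baire_part by blast
next
  define lev :: "nat \<Rightarrow> real option" where "lev = (\<lambda>_. None)"
  have g: "goodlev UNIV lev" unfolding goodlev_def lev_def by auto
  have c: "countable (UNIV - (UNIV::real set))" by simp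
  have T1: "pi_tree sorgenfrey (FF lev UNIV)" using tree_main(1)[OF c g] by simp
  have T2: "\<exists>N. \<forall>n\<ge>N. lev n = None \<longrightarrow> n \<in> rise (FF lev UNIV) p U"
    if "p \<in> topspace sorgenfrey" "nbhd sorgenfrey p U" for p U
    using tree_main(2)[OF c g, of p U] that by simp
  have "cofin (UNIV::nat set) \<ggreater> Rise (FF lev UNIV) sorgenfrey"
  proof (rule refine_from)
    fix D assume "D \<in> Rise (FF lev UNIV) sorgenfrey"
    then obtain p U where D: "D = rise (FF lev UNIV) p U" "p \<in> topspace sorgenfrey" "nbhd sorgenfrey p U"
      unfolding Rise_def by blast
    obtain N where "\<forall>n\<ge>N. lev n = None \<longrightarrow> n \<in> rise (FF lev UNIV) p U" using T2[OF D(2,3)] by blast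
    then have "\<forall>n\<in>UNIV. n \<ge> N \<longrightarrow> n \<in> D" unfolding D(1) lev_def by simp
    then show "\<exists>N. \<forall>n\<in>UNIV. n \<ge> N \<longrightarrow> n \<in> D" by blast
  qed auto
  then show "\<exists>G. pi_tree sorgenfrey G \<and> cofin (UNIV::nat set) \<ggreater> Rise G sorgenfrey"
    using T1 by blast
next
  fix X :: "real set"
  assume cX: "countable (UNIV - X)"
  define lev :: "nat \<Rightarrow> real option" where
    "lev = (\<lambda>n. if odd n \<or> UNIV - X = {} then None else Some (from_nat_into (UNIV - X) (n div 2 - 1)))"
  have g: "goodlev X lev" unfolding goodlev_def
  proof (intro conjI allI impI)
    fix n d assume "lev n = Some d"
    then have "UNIV - X \<noteq> {}" "d = from_nat_into (UNIV - X) (n div 2 - 1)"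
      unfolding lev_def by (auto split: if_splits)
    then show "d \<notin> X" using from_nat_into[of "UNIV - X"] by auto
  next
    fix y assume y: "y \<notin> X"
    then obtain k where k: "from_nat_into (UNIV - X) k = y" using from_nat_into_surj[OF cX, of y] by auto
    have "lev (2*k+2) = Some y" unfolding lev_def using k y by auto
    then show "\<exists>n\<ge>1. lev n = Some y" by (intro exI[of _ "2*k+2"]) auto
  next
    fix N show "\<exists>n\<ge>N. lev n = None" unfolding lev_def by (intro exI[of _ "2*N+1"]) auto
  qed
  have "cofin {2*n+1 | n::nat. True} \<ggreater> Rise (FF lev X) (subtopology sorgenfrey X)"
  proof (rule refine_from)
    fix D assume "D \<in> Rise (FF lev X) (subtopology sorgenfrey X)"
    then obtain p U where D: "D = rise (FF lev X) p U" "p \<in> topspace (subtopology sorgenfrey X)"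
      "nbhd (subtopology sorgenfrey X) p U"
      unfolding Rise_def by blast
    obtain N where N: "\<forall>n\<ge>N. lev n = None \<longrightarrow> n \<in> rise (FF lev X) p U"
      using tree_main(2)[OF cX g D(2,3)] by blast
    have "\<forall>n\<in>{2*n+1 | n::nat. True}. n \<ge> N \<longrightarrow> n \<in> D"
    proof (intro ballI impI)
      fix n assume "n \<in> {2*n+1 | n::nat. True}" "N \<le> n"
      moreover then have "lev n = None" unfolding lev_def by auto
      ultimately show "n \<in> D" using N D(1) by blast
    qed
    then show "\<exists>N. \<forall>n\<in>{2*n+1 | n::nat. True}. n \<ge> N \<longrightarrow> n \<in> D" by blast
  next
    fix N show "\<exists>m\<in>{2*n+1 | n::nat. True}. m \<ge> N" by (intro bexI[of _ "2*N+1"]) auto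
  qed
  then show "\<exists>H. pi_tree (subtopology sorgenfrey X) H \<and>
             cofin {2*n+1 | n::nat. True} \<ggreater> Rise H (subtopology sorgenfrey X)"
    using tree_main(1)[OF cX g] by blast
qed

end
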